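(* Let $\Gamma$ be a finite connected $2$-distance-transitive graph of valency $k\ge3$. Then one of the following holds: (1) $\Gamma$ is a distance-transitive strongly regular graph; (2) $\Gamma$ has diameter $d\ge3$ and $b_1\ge\max\{c_2,\frac13(k+1)\}$.
   Context: $\Gamma$ is $2$-distance-transitive if its diameter is at least $2$, $\mathrm{Aut}(\Gamma)$ is vertex-transitive, and $\mathrm{Aut}(\Gamma)_u$ is transitive on $\Gamma(u)$ and $\Gamma_2(u)$ for each $u$. $b_1$ is the number of neighbours of a vertex $w\in\Gamma(u)$ lying at distance $2$ from $u$, and $c_2$ is the number of common neighbours of two vertices at distance $2$. Distance-transitive means $\mathrm{Aut}(\Gamma)$ is transitive on ordered pairs of vertices at distance $i$ for each $i$. *)

theory Defs
  imports Main
begin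

definition graph :: "'a set \<Rightarrow> ('a \<Rightarrow> 'a \<Rightarrow> bool) \<Rightarrow> bool" where
  "graph V E \<longleftrightarrow> finite V \<and> (\<forall>x y. E x y \<longrightarrow> x \<in> V \<and> y \<in> V)
     \<and> (\<forall>x y. E x y \<longrightarrow> E y x) \<and> (\<forall>x. \<not> E x x)"

definition nbhd :: "('a \<Rightarrow> 'a \<Rightarrow> bool) \<Rightarrow> 'a \<Rightarrow> 'a set" where
  "nbhd E u = {v. E u v}"

inductive walk :: "('a \<Rightarrow> 'a \<Rightarrow> bool) \<Rightarrow> 'a \<Rightarrow> 'a \<Rightarrow> nat \<Rightarrow> bool" for E where
  walk0: "walk E u u 0"
| walkS: "E u w \<Longrightarrow> walk E w v n \<Longrightarrow> walk E u v (Suc n)"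

definition connected_graph :: "'a set \<Rightarrow> ('a \<Rightarrow> 'a \<Rightarrow> bool) \<Rightarrow> bool" where
  "connected_graph V E \<longleftrightarrow> (\<forall>u\<in>V. \<forall>v\<in>V. \<exists>n. walk E u v n)"

definition gdist :: "('a \<Rightarrow> 'a \<Rightarrow> bool) \<Rightarrow> 'a \<Rightarrow> 'a \<Rightarrow> nat" where
  "gdist E u v = (LEAST n. walk E u v n)"

definition sphere :: "'a set \<Rightarrow> ('a \<Rightarrow> 'a \<Rightarrow> bool) \<Rightarrow> nat \<Rightarrow> 'a \<Rightarrow> 'a set" where
  "sphere V E i u = {v \<in> V. gdist E u v = i}"

definition diameter :: "'a set \<Rightarrow> ('a \<Rightarrow> 'a \<Rightarrow> bool) \<Rightarrow> nat" where
  "diameter V E = Max {gdist E u v | u v. u \<in> V \<and> v \<in> V}"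

definition regular :: "'a set \<Rightarrow> ('a \<Rightarrow> 'a \<Rightarrow> bool) \<Rightarrow> nat \<Rightarrow> bool" where
  "regular V E k \<longleftrightarrow> (\<forall>v\<in>V. card (nbhd E v) = k)"

definition automorphisms :: "'a set \<Rightarrow> ('a \<Rightarrow> 'a \<Rightarrow> bool) \<Rightarrow> ('a \<Rightarrow> 'a) set" where
  "automorphisms V E = {\<sigma>. bij_betw \<sigma> V V \<and> (\<forall>x\<in>V. \<forall>y\<in>V. E x y \<longleftrightarrow> E (\<sigma> x) (\<sigma> y))}"

definition vertex_transitive :: "'a set \<Rightarrow> ('a \<Rightarrow> 'a \<Rightarrow> bool) \<Rightarrow> bool" where
  "vertex_transitive V E \<longleftrightarrow>
     (\<forall>u\<in>V. \<forall>v\<in>V. \<exists>\<sigma>\<in>automorphisms V E. \<sigma> u = v)"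

definition stab_transitive_on :: "'a set \<Rightarrow> ('a \<Rightarrow> 'a \<Rightarrow> bool) \<Rightarrow> 'a \<Rightarrow> 'a set \<Rightarrow> bool" where
  "stab_transitive_on V E u S \<longleftrightarrow>
     (\<forall>v\<in>S. \<forall>w\<in>S. \<exists>\<sigma>\<in>automorphisms V E. \<sigma> u = u \<and> \<sigma> v = w)"

definition two_distance_transitive :: "'a set \<Rightarrow> ('a \<Rightarrow> 'a \<Rightarrow> bool) \<Rightarrow> bool" where
  "two_distance_transitive V E \<longleftrightarrow>
     diameter V E \<ge> 2 \<and> vertex_transitive V E \<and>
     (\<forall>u\<in>V. stab_transitive_on V E u (sphere V E 1 u)
           \<and> stab_transitive_on V E u (sphere V E 2 u))"

definition distance_transitive :: "'a set \<Rightarrow> ('a \<Rightarrow> 'a \<Rightarrow> bool) \<Rightarrow> bool" where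
  "distance_transitive V E \<longleftrightarrow>
     (\<forall>u\<in>V. \<forall>v\<in>V. \<forall>x\<in>V. \<forall>y\<in>V. gdist E u v = gdist E x y \<longrightarrow>
        (\<exists>\<sigma>\<in>automorphisms V E. \<sigma> u = x \<and> \<sigma> v = y))"

definition strongly_regular :: "'a set \<Rightarrow> ('a \<Rightarrow> 'a \<Rightarrow> bool) \<Rightarrow> bool" where
  "strongly_regular V E \<longleftrightarrow> (\<exists>k lam mu. regular V E k \<and>
     (\<forall>u\<in>V. \<forall>v\<in>V. E u v \<longrightarrow> card (nbhd E u \<inter> nbhd E v) = lam) \<and>
     (\<forall>u\<in>V. \<forall>v\<in>V. u \<noteq> v \<and> \<not> E u v \<longrightarrow> card (nbhd E u \<inter> nbhd E v) = mu))"

definition b1 :: "'a set \<Rightarrow> ('a \<Rightarrow> 'a \<Rightarrow> bool) \<Rightarrow> 'a \<Rightarrow> 'a \<Rightarrow> nat" where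
  "b1 V E u w = card (nbhd E w \<inter> sphere V E 2 u)"

definition c2 :: "('a \<Rightarrow> 'a \<Rightarrow> bool) \<Rightarrow> 'a \<Rightarrow> 'a \<Rightarrow> nat" where
  "c2 E u v = card (nbhd E u \<inter> nbhd E v)"

end

theory Submission
  imports Defs
begin

lemma card_inj_int: "inj_on (f::'a\<Rightarrow>'b) V \<Longrightarrow> A \<subseteq> V \<Longrightarrow> B \<subseteq> V \<Longrightarrow> card (f ` A \<inter> f ` B) = card (A \<inter> B)"
proof -
  assume a: "inj_on f V" "A \<subseteq> V" "B \<subseteq> V"
  have e: "f ` (A \<inter> B) = f ` A \<inter> f ` B" using inj_on_image_Int[OF a] .
  have i: "inj_on f (A \<inter> B)" using inj_on_subset[OF a(1)] a(2) by blast
  have "card (f ` (A \<inter> B)) = card (A \<inter> B)" by (rule card_image[OF i])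
  then show ?thesis by (simp only: e)
qed

context
  fixes V :: "'a set" and E :: "'a \<Rightarrow> 'a \<Rightarrow> bool"
  assumes G: "graph V E" and C: "connected_graph V E"
begin

lemma Ein1: "E x y \<Longrightarrow> x \<in> V" using G by (auto simp: graph_def)
lemma Ein2: "E x y \<Longrightarrow> y \<in> V" using G by (auto simp: graph_def)
lemma Esym: "E x y \<Longrightarrow> E y x" using G by (auto simp: graph_def)
lemma Eirr: "\<not> E x x" using G by (auto simp: graph_def)
lemma finV: "finite V" using G by (auto simp: graph_def)

lemma nbhd_sub: "nbhd E w \<subseteq> V" using Ein2 by (auto simp: nbhd_def)
lemma sphere_sub: "sphere V E i u \<subseteq> V" by (auto simp: sphere_def)
lemma fin_nbhd: "finite (nbhd E w)" using nbhd_sub finV finite_subset by blast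

lemma walk_snoc: "walk E u v n \<Longrightarrow> E v x \<Longrightarrow> walk E u x (Suc n)"
  by (induction rule: walk.induct) (auto intro: walk.intros)

lemma walk_app: "walk E u v n \<Longrightarrow> walk E v x m \<Longrightarrow> walk E u x (n+m)"
  by (induction rule: walk.induct) (auto intro: walk.intros)

lemma walk_rev: "walk E u v n \<Longrightarrow> walk E v u n"
  by (induction rule: walk.induct) (auto intro: walk.intros walk_snoc Esym)

lemma walk_split: "walk E u v n \<Longrightarrow> j \<le> n \<Longrightarrow> \<exists>x. walk E u x j \<and> walk E x v (n-j)"
proof (induction arbitrary: j rule: walk.induct)
  case (walk0 u)
  then show ?case by (auto intro: walk.intros)
next
  case (walkS u w v n)
  show ?case
  proof (cases j)
    case 0
    then show ?thesis using walkS by (auto intro: walk.intros)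
  next
    case (Suc j')
    then obtain x where "walk E w x j'" "walk E x v (n - j')" using walkS by fastforce
    then show ?thesis using walkS Suc by (auto intro: walk.intros)
  qed
qed

lemma walk_V: "walk E u v n \<Longrightarrow> u \<in> V \<Longrightarrow> v \<in> V"
  by (induction rule: walk.induct) (auto dest: Ein2)

lemma walk0_eq: "walk E u v 0 \<Longrightarrow> u = v"
  by (auto elim: walk.cases)

lemma walk1: "walk E u v (Suc 0) \<Longrightarrow> E u v"
  by (auto elim: walk.cases dest: walk0_eq)

lemma gd_walk: "u \<in> V \<Longrightarrow> v \<in> V \<Longrightarrow> walk E u v (gdist E u v)"
  using C unfolding connected_graph_def gdist_def by (meson LeastI_ex)

lemma gd_le: "walk E u v n \<Longrightarrow> gdist E u v \<le> n"
  unfolding gdist_def by (rule Least_le)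

lemma gd_sym: "u \<in> V \<Longrightarrow> v \<in> V \<Longrightarrow> gdist E u v = gdist E v u"
  by (meson antisym gd_le gd_walk walk_rev)

lemma gd_tri: "u \<in> V \<Longrightarrow> v \<in> V \<Longrightarrow> x \<in> V \<Longrightarrow> gdist E u x \<le> gdist E u v + gdist E v x"
  by (meson gd_le gd_walk walk_app)

lemma gd0: "u \<in> V \<Longrightarrow> v \<in> V \<Longrightarrow> gdist E u v = 0 \<longleftrightarrow> u = v"
  by (metis gd_walk walk0_eq gd_le walk.walk0 le_zero_eq)

lemma gd1: "u \<in> V \<Longrightarrow> v \<in> V \<Longrightarrow> gdist E u v = 1 \<longleftrightarrow> E u v"
proof
  assume "u \<in> V" "v \<in> V" "gdist E u v = 1"
  then show "E u v" using gd_walk walk1 by fastforce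
next
  assume a: "u \<in> V" "v \<in> V" "E u v"
  then have "walk E u v 1" by (auto intro: walk.intros)
  then have "gdist E u v \<le> 1" by (rule gd_le)
  moreover have "gdist E u v \<noteq> 0" using a gd0 Eirr by metis
  ultimately show "gdist E u v = 1" by simp
qed

lemma gd2E: "u \<in> V \<Longrightarrow> v \<in> V \<Longrightarrow> gdist E u v = 2 \<Longrightarrow> \<exists>w. E u w \<and> E w v"
proof -
  assume a: "u \<in> V" "v \<in> V" "gdist E u v = 2"
  then have "walk E u v 2" using gd_walk by metis
  then obtain x where "walk E u x 1" "walk E x v 1" using walk_split[of u v 2 1] by auto
  then show ?thesis using walk1 by auto
qed

lemma gd_le2: "E u w \<Longrightarrow> E w v \<Longrightarrow> gdist E u v \<le> 2"
proof -
  assume "E u w" "E w v"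
  then have "walk E u v 2" by (auto intro!: walk.intros simp: numeral_2_eq_2)
  then show ?thesis by (rule gd_le)
qed

lemma gd_le_diam: "u \<in> V \<Longrightarrow> v \<in> V \<Longrightarrow> gdist E u v \<le> diameter V E"
proof -
  assume a: "u \<in> V" "v \<in> V"
  have "{gdist E u v | u v. u \<in> V \<and> v \<in> V} = (\<lambda>(u,v). gdist E u v) ` (V \<times> V)" by auto
  then have "finite {gdist E u v | u v. u \<in> V \<and> v \<in> V}" using finV by simp
  then show ?thesis unfolding diameter_def using a by (intro Max_ge) auto
qed

lemma dist3_config:
  assumes "a \<in> V" "c \<in> V" "gdist E a c \<ge> 3"
  shows "\<exists>b x. b \<in> V \<and> x \<in> V \<and> gdist E a b = 2 \<and> E b x \<and> gdist E a x = 3"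
proof -
  let ?n = "gdist E a c"
  have "walk E a c ?n" using assms gd_walk by blast
  then obtain x where x1: "walk E a x 3" and x2: "walk E x c (?n - 3)" using walk_split assms(3) by blast
  have xV: "x \<in> V" using x1 assms(1) walk_V by blast
  have "gdist E a c \<le> gdist E a x + gdist E x c" using gd_tri assms xV by blast
  moreover have "gdist E x c \<le> ?n - 3" using x2 gd_le by blast
  moreover have "gdist E a x \<le> 3" using x1 gd_le by blast
  ultimately have ax: "gdist E a x = 3" using assms(3) by linarith
  obtain b where b1: "walk E a b 2" and b2: "walk E b x 1" using walk_split[OF x1, of 2] by auto
  have bV: "b \<in> V" using b1 assms(1) walk_V by blast
  have ebx: "E b x" using b2 walk1 by simp
  have "gdist E a b \<le> 2" using b1 gd_le by blast
  moreover have "gdist E a x \<le> gdist E a b + gdist E b x" using gd_tri assms bV xV by blast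
  moreover have "gdist E b x = 1" using gd1 bV xV ebx by blast
  ultimately have "gdist E a b = 2" using ax by linarith
  then show ?thesis using bV xV ebx ax by blast
qed


lemma autD:
  assumes "\<sigma> \<in> automorphisms V E"
  shows "bij_betw \<sigma> V V" "inj_on \<sigma> V" "\<sigma> ` V = V"
    "\<And>x. x \<in> V \<Longrightarrow> \<sigma> x \<in> V"
    "\<And>x y. x \<in> V \<Longrightarrow> y \<in> V \<Longrightarrow> E (\<sigma> x) (\<sigma> y) \<longleftrightarrow> E x y"
  using assms unfolding automorphisms_def bij_betw_def by auto

lemma aut_comp: "\<sigma> \<in> automorphisms V E \<Longrightarrow> \<tau> \<in> automorphisms V E \<Longrightarrow> \<sigma> \<circ> \<tau> \<in> automorphisms V E"
proof -
  assume a: "\<sigma> \<in> automorphisms V E" "\<tau> \<in> automorphisms V E"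
  note A = autD[OF a(1)] and B = autD[OF a(2)]
  have "bij_betw (\<sigma> \<circ> \<tau>) V V" using A(1) B(1) bij_betw_trans by blast
  moreover have "\<forall>x\<in>V. \<forall>y\<in>V. E x y \<longleftrightarrow> E ((\<sigma> \<circ> \<tau>) x) ((\<sigma> \<circ> \<tau>) y)"
    using A(5) B(4) B(5) by simp
  ultimately show ?thesis unfolding automorphisms_def by blast
qed

lemma aut_walk: "walk E u v n \<Longrightarrow> \<sigma> \<in> automorphisms V E \<Longrightarrow> u \<in> V \<Longrightarrow> walk E (\<sigma> u) (\<sigma> v) n"
proof (induction rule: walk.induct)
  case (walk0 u)
  then show ?case by (auto intro: walk.intros)
next
  case (walkS u w v n)
  then have "w \<in> V" using Ein2 by blast
  then have "E (\<sigma> u) (\<sigma> w)" using walkS autD(5)[OF walkS(4)] by blast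
  then show ?case using walkS \<open>w \<in> V\<close> by (auto intro: walk.intros)
qed

lemma aut_walk_rev: "walk E p q n \<Longrightarrow> \<sigma> \<in> automorphisms V E \<Longrightarrow> p = \<sigma> u \<Longrightarrow> q = \<sigma> v
   \<Longrightarrow> u \<in> V \<Longrightarrow> v \<in> V \<Longrightarrow> walk E u v n"
proof (induction arbitrary: u rule: walk.induct)
  case (walk0 p)
  have "u = v" using inj_onD[OF autD(2)[OF walk0(1)], of u v] walk0(2-5) by simp
  then show ?case by (auto intro: walk.intros)
next
  case (walkS p w' q n)
  have "w' \<in> V" using Ein2[OF walkS(1)] .
  then obtain w where w: "w \<in> V" "w' = \<sigma> w" using autD(3)[OF walkS(4)] by blast
  then have "E (\<sigma> u) (\<sigma> w)" using walkS(1,5) by simp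
  then have "E u w" using autD(5)[OF walkS(4) walkS(7) w(1)] by simp
  moreover have "walk E w v n" using walkS(3)[OF walkS(4) w(2) walkS(6) w(1) walkS(8)] .
  ultimately show ?case by (auto intro: walk.intros)
qed

lemma aut_gd: "\<sigma> \<in> automorphisms V E \<Longrightarrow> u \<in> V \<Longrightarrow> v \<in> V \<Longrightarrow> gdist E (\<sigma> u) (\<sigma> v) = gdist E u v"
proof -
  assume a: "\<sigma> \<in> automorphisms V E" "u \<in> V" "v \<in> V"
  have "\<And>n. walk E (\<sigma> u) (\<sigma> v) n \<longleftrightarrow> walk E u v n"
  proof
    fix n assume "walk E (\<sigma> u) (\<sigma> v) n"
    then show "walk E u v n" using aut_walk_rev[of "\<sigma> u" "\<sigma> v" n \<sigma> u v] a by simp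
  next
    fix n assume "walk E u v n"
    then show "walk E (\<sigma> u) (\<sigma> v) n" using aut_walk[of u v n \<sigma>] a by simp
  qed
  then show ?thesis by (simp add: gdist_def)
qed

lemma aut_nbhd: "\<sigma> \<in> automorphisms V E \<Longrightarrow> w \<in> V \<Longrightarrow> \<sigma> ` nbhd E w = nbhd E (\<sigma> w)"
proof -
  assume a: "\<sigma> \<in> automorphisms V E" "w \<in> V"
  note D = autD[OF a(1)]
  show ?thesis
  proof
    show "\<sigma> ` nbhd E w \<subseteq> nbhd E (\<sigma> w)"
    proof
      fix z assume "z \<in> \<sigma> ` nbhd E w"
      then obtain y where y: "E w y" "z = \<sigma> y" by (auto simp: nbhd_def)
      then have "y \<in> V" using Ein2 by blast
      then show "z \<in> nbhd E (\<sigma> w)" using y a D(5) by (auto simp: nbhd_def)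
    qed
    show "nbhd E (\<sigma> w) \<subseteq> \<sigma> ` nbhd E w"
    proof
      fix z assume "z \<in> nbhd E (\<sigma> w)"
      then have z: "z \<in> V" "E (\<sigma> w) z" by (auto simp: nbhd_def dest: Ein2)
      then obtain y where "y \<in> V" "z = \<sigma> y" using D(3) by blast
      then show "z \<in> \<sigma> ` nbhd E w" using z a D(5) by (auto simp: nbhd_def)
    qed
  qed
qed

lemma aut_sphere: "\<sigma> \<in> automorphisms V E \<Longrightarrow> u \<in> V \<Longrightarrow> \<sigma> ` sphere V E i u = sphere V E i (\<sigma> u)"
proof -
  assume a: "\<sigma> \<in> automorphisms V E" "u \<in> V"
  note D = autD[OF a(1)]
  show ?thesis
  proof
    show "\<sigma> ` sphere V E i u \<subseteq> sphere V E i (\<sigma> u)"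
    proof
      fix z assume "z \<in> \<sigma> ` sphere V E i u"
      then obtain y where y: "y \<in> V" "gdist E u y = i" "z = \<sigma> y" by (auto simp: sphere_def)
      then have "gdist E (\<sigma> u) z = i" using aut_gd[OF a(1) a(2) y(1)] by simp
      then show "z \<in> sphere V E i (\<sigma> u)" using D(4)[OF y(1)] y(3) by (simp add: sphere_def)
    qed
    show "sphere V E i (\<sigma> u) \<subseteq> \<sigma> ` sphere V E i u"
    proof
      fix z assume "z \<in> sphere V E i (\<sigma> u)"
      then have z: "z \<in> V" "gdist E (\<sigma> u) z = i" by (auto simp: sphere_def)
      then obtain y where "y \<in> V" "z = \<sigma> y" using D(3) by blast
      then have "gdist E u y = i" using z aut_gd[OF a(1) a(2) \<open>y \<in> V\<close>] by simp
      then show "z \<in> \<sigma> ` sphere V E i u" using \<open>y \<in> V\<close> \<open>z = \<sigma> y\<close> by (auto simp: sphere_def)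
    qed
  qed
qed

lemma aut_card_int: "\<sigma> \<in> automorphisms V E \<Longrightarrow> A \<subseteq> V \<Longrightarrow> B \<subseteq> V \<Longrightarrow> card (\<sigma> ` A \<inter> \<sigma> ` B) = card (A \<inter> B)"
  using card_inj_int autD(2) by blast

context
  assumes T: "two_distance_transitive V E"
begin

lemma transfer:
  assumes "i = 1 \<or> i = 2" "u \<in> V" "x \<in> V" "v \<in> sphere V E i u" "y \<in> sphere V E i x"
  shows "\<exists>\<sigma>\<in>automorphisms V E. \<sigma> u = x \<and> \<sigma> v = y"
proof -
  have "vertex_transitive V E" using T unfolding two_distance_transitive_def by simp
  then obtain \<tau> where t: "\<tau> \<in> automorphisms V E" "\<tau> u = x"
    using assms(2,3) unfolding vertex_transitive_def by blast
  have "\<tau> v \<in> sphere V E i x" using aut_sphere[OF t(1) assms(2), of i] assms(4) t(2) by blast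
  moreover have "stab_transitive_on V E x (sphere V E i x)"
    using T assms(1,3) unfolding two_distance_transitive_def by auto
  ultimately obtain \<rho> where r: "\<rho> \<in> automorphisms V E" "\<rho> x = x" "\<rho> (\<tau> v) = y"
    using assms(5) unfolding stab_transitive_on_def by blast
  have "(\<rho> \<circ> \<tau>) u = x" "(\<rho> \<circ> \<tau>) v = y" using r t by auto
  then show ?thesis using aut_comp[OF r(1) t(1)] by blast
qed

lemma b1_inv: assumes "E u w" "E x y" shows "b1 V E u w = b1 V E x y"
proof -
  have V: "u \<in> V" "w \<in> V" "x \<in> V" "y \<in> V" using assms Ein1 Ein2 by blast+
  have "\<exists>\<sigma>\<in>automorphisms V E. \<sigma> u = x \<and> \<sigma> w = y"
    using transfer[of 1 u x w y] V assms gd1[of u w] gd1[of x y] by (simp add: sphere_def)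
  then obtain \<sigma> where s: "\<sigma> \<in> automorphisms V E" "\<sigma> u = x" "\<sigma> w = y" by blast
  have "b1 V E x y = card (\<sigma> ` nbhd E w \<inter> \<sigma> ` sphere V E 2 u)"
    using s V aut_nbhd aut_sphere by (simp add: b1_def)
  also have "\<dots> = b1 V E u w" using aut_card_int[OF s(1) nbhd_sub sphere_sub] by (simp add: b1_def)
  finally show ?thesis by simp
qed

lemma a1_inv: assumes "E u w" "E x y" shows "card (nbhd E u \<inter> nbhd E w) = card (nbhd E x \<inter> nbhd E y)"
proof -
  have V: "u \<in> V" "w \<in> V" "x \<in> V" "y \<in> V" using assms Ein1 Ein2 by blast+
  have "\<exists>\<sigma>\<in>automorphisms V E. \<sigma> u = x \<and> \<sigma> w = y"
    using transfer[of 1 u x w y] V assms gd1[of u w] gd1[of x y] by (simp add: sphere_def)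
  then obtain \<sigma> where s: "\<sigma> \<in> automorphisms V E" "\<sigma> u = x" "\<sigma> w = y" by blast
  have "card (nbhd E x \<inter> nbhd E y) = card (\<sigma> ` nbhd E u \<inter> \<sigma> ` nbhd E w)"
    using s V aut_nbhd by simp
  also have "\<dots> = card (nbhd E u \<inter> nbhd E w)" using aut_card_int[OF s(1) nbhd_sub nbhd_sub] by simp
  finally show ?thesis by simp
qed

lemma c2_inv: assumes "u \<in> V" "v \<in> V" "x \<in> V" "y \<in> V" "gdist E u v = 2" "gdist E x y = 2"
  shows "c2 E u v = c2 E x y"
proof -
  have "\<exists>\<sigma>\<in>automorphisms V E. \<sigma> u = x \<and> \<sigma> v = y"
    using transfer[of 2 u x v y] assms by (simp add: sphere_def)
  then obtain \<sigma> where s: "\<sigma> \<in> automorphisms V E" "\<sigma> u = x" "\<sigma> v = y" by blast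
  have "c2 E x y = card (\<sigma> ` nbhd E u \<inter> \<sigma> ` nbhd E v)"
    using s assms aut_nbhd by (simp add: c2_def)
  also have "\<dots> = c2 E u v" using aut_card_int[OF s(1) nbhd_sub nbhd_sub] by (simp add: c2_def)
  finally show ?thesis by simp
qed

end

end

theorem lemma6p3:
  fixes V :: "'a set" and E :: "'a \<Rightarrow> 'a \<Rightarrow> bool" and k :: nat
  assumes "graph V E" and "connected_graph V E"
    and "two_distance_transitive V E"
    and "regular V E k" and "k \<ge> 3"
  shows "(distance_transitive V E \<and> strongly_regular V E)
       \<or> (diameter V E \<ge> 3 \<and>
          (\<forall>u\<in>V. \<forall>w\<in>V. \<forall>v\<in>V. E u w \<and> gdist E u v = 2 \<longrightarrow>
              b1 V E u w \<ge> c2 E u v \<and> 3 * b1 V E u w \<ge> k + 1))"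
proof (cases "\<exists>a\<in>V. \<exists>c\<in>V. gdist E a c \<ge> 3")
  case True
  note G = assms(1) and C = assms(2) and T = assms(3)
  then obtain a c where ac: "a \<in> V" "c \<in> V" "gdist E a c \<ge> 3" using True by blast
  have diam: "diameter V E \<ge> 3" using gd_le_diam[OF G C ac(1,2)] ac(3) by linarith
  obtain b x where bx: "b \<in> V" "x \<in> V" "gdist E a b = 2" "E b x" "gdist E a x = 3"
    using dist3_config[OF G C ac] by blast
  have main: "b1 V E u w \<ge> c2 E u v \<and> 3 * b1 V E u w \<ge> k + 1"
    if uwv: "u \<in> V" "w \<in> V" "v \<in> V" "E u w" "gdist E u v = 2" for u w v
  proof -
    have "c2 E u v = c2 E a b" using c2_inv[OF G C T uwv(1,3) ac(1) bx(1) uwv(5) bx(3)] .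
    also have "c2 E a b \<le> b1 V E x b"
    proof -
      have "nbhd E a \<inter> nbhd E b \<subseteq> nbhd E b \<inter> sphere V E 2 x"
      proof
        fix y assume y: "y \<in> nbhd E a \<inter> nbhd E b"
        then have ey: "E a y" "E b y" by (auto simp: nbhd_def)
        then have yV: "y \<in> V" using Ein2[OF G C] by blast
        have "gdist E x y \<le> 2" using gd_le2[OF G C Esym[OF G C bx(4)] ey(2)] .
        moreover have "\<not> gdist E x y \<le> 1"
        proof
          assume h: "gdist E x y \<le> 1"
          have "gdist E a x \<le> gdist E a y + gdist E y x" using gd_tri[OF G C ac(1) yV bx(2)] .
          moreover have "gdist E a y = 1" using gd1[OF G C ac(1) yV] ey(1) by simp
          moreover have "gdist E y x = gdist E x y" using gd_sym[OF G C yV bx(2)] .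
          ultimately show False using h bx(5) by linarith
        qed
        ultimately have "gdist E x y = 2" by linarith
        then show "y \<in> nbhd E b \<inter> sphere V E 2 x" using y yV by (auto simp: sphere_def)
      qed
      then show ?thesis unfolding c2_def b1_def
        by (intro card_mono) (auto intro: finite_subset[OF _ fin_nbhd[OF G C]])
    qed
    also have "b1 V E x b = b1 V E u w" using b1_inv[OF G C T Esym[OF G C bx(4)] uwv(4)] .
    finally have c2le: "c2 E u v \<le> b1 V E u w" .
    obtain m where m: "E u m" "E m v" using gd2E[OF G C uwv(1,3,5)] by blast
    have "m \<in> nbhd E u \<inter> nbhd E v" using m Esym[OF G C] by (auto simp: nbhd_def)
    then have "c2 E u v \<ge> 1" unfolding c2_def
      using fin_nbhd[OF G C] by (metis One_nat_def Suc_leI card_gt_0_iff empty_iff finite_Int)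
    then have "b1 V E u w \<ge> 1" using c2le by linarith
    then have "nbhd E w \<inter> sphere V E 2 u \<noteq> {}" unfolding b1_def by (metis card.empty not_one_le_zero)
    then obtain v' where v': "E w v'" "v' \<in> V" "gdist E u v' = 2" by (auto simp: nbhd_def sphere_def)
    have c2v': "c2 E u v' = c2 E u v" using c2_inv[OF G C T uwv(1) v'(2) uwv(1,3) v'(3) uwv(5)] .
    define P where "P = nbhd E u \<inter> nbhd E w"
    define Q where "Q = nbhd E v' \<inter> nbhd E w"
    define S where "S = nbhd E w \<inter> sphere V E 2 u"
    have finw: "finite (nbhd E w)" using fin_nbhd[OF G C] .
    have kw: "card (nbhd E w) = k" using assms(4) uwv(2) by (simp add: regular_def)
    have cP: "card P = card Q" unfolding P_def Q_def
      using a1_inv[OF G C T uwv(4) Esym[OF G C v'(1)]] .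
    have uv': "u \<noteq> v'" using gd0[OF G C uwv(1) v'(2)] v'(3) by auto
    have nuv': "\<not> E u v'" using gd1[OF G C uwv(1) v'(2)] v'(3) by auto
    have decomp: "nbhd E w = insert u (P \<union> S)"
    proof
      show "nbhd E w \<subseteq> insert u (P \<union> S)"
      proof
        fix y assume y: "y \<in> nbhd E w"
        then have ey: "E w y" "y \<in> V" using Ein2[OF G C] by (auto simp: nbhd_def)
        show "y \<in> insert u (P \<union> S)"
        proof (cases "y = u \<or> E u y")
          case True then show ?thesis using y Esym[OF G C] uwv(4) by (auto simp: P_def nbhd_def)
        next
          case False
          have "gdist E u y \<le> 2" using gd_le2[OF G C uwv(4) ey(1)] .
          moreover have "gdist E u y \<noteq> 0" using gd0[OF G C uwv(1) ey(2)] False by auto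
          moreover have "gdist E u y \<noteq> 1" using gd1[OF G C uwv(1) ey(2)] False by auto
          ultimately have "gdist E u y = 2" by linarith
          then show ?thesis using y ey by (auto simp: S_def sphere_def)
        qed
      qed
      show "insert u (P \<union> S) \<subseteq> nbhd E w"
        using uwv(4) Esym[OF G C] by (auto simp: P_def S_def nbhd_def)
    qed
    have finP: "finite P" "finite S" "finite Q" using finw by (auto simp: P_def S_def Q_def)
    have uPS: "u \<notin> P \<union> S" using Eirr[OF G C, of u] uwv(1) gd0[OF G C uwv(1) uwv(1)]
      by (auto simp: P_def S_def nbhd_def sphere_def)
    have PS: "P \<inter> S = {}"
    proof -
      have "False" if "y \<in> P" "y \<in> S" for y
      proof -
        have "E u y" "y \<in> V" "gdist E u y = 2" using that by (auto simp: P_def S_def nbhd_def sphere_def)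
        then show False using gd1[OF G C uwv(1), of y] by simp
      qed
      then show ?thesis by blast
    qed
    have kdec: "k = 1 + card P + b1 V E u w"
    proof -
      have "card (nbhd E w) = Suc (card (P \<union> S))" using decomp uPS finP
        by (simp add: card_insert_disjoint)
      also have "card (P \<union> S) = card P + card S" using card_Un_disjoint[OF finP(1,2) PS] .
      finally show ?thesis using kw by (simp add: S_def b1_def)
    qed
    have PQsub: "P \<union> Q \<subseteq> nbhd E w - {u, v'}"
      using Eirr[OF G C] nuv' Esym[OF G C] by (auto simp: P_def Q_def nbhd_def)
    have "u \<in> nbhd E w" "v' \<in> nbhd E w" using uwv(4) v'(1) Esym[OF G C] by (auto simp: nbhd_def)
    then have "card (nbhd E w - {u, v'}) = k - 2" using kw uv' finw by (simp add: card_Diff_subset)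
    then have cPQ: "card (P \<union> Q) \<le> k - 2"
      using card_mono[OF _ PQsub] finw by (metis finite_Diff)
    have UI: "card (P \<union> Q) + card (P \<inter> Q) = card P + card Q" using card_Un_Int[OF finP(1,3)] by simp
    have "insert w (P \<inter> Q) \<subseteq> nbhd E u \<inter> nbhd E v'"
      using uwv(4) v'(1) Esym[OF G C] by (auto simp: P_def Q_def nbhd_def)
    moreover have "w \<notin> P \<inter> Q" using Eirr[OF G C] by (auto simp: P_def nbhd_def)
    ultimately have "Suc (card (P \<inter> Q)) \<le> c2 E u v'" unfolding c2_def
      using card_mono[of "nbhd E u \<inter> nbhd E v'" "insert w (P \<inter> Q)"] fin_nbhd[OF G C] finP
      by (metis card_insert_disjoint finite_Int)
    then have "Suc (card (P \<inter> Q)) \<le> b1 V E u w" using c2v' c2le by linarith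
    then have "3 * b1 V E u w \<ge> k + 1" using kdec UI cPQ cP by linarith
    then show ?thesis using c2le by simp
  qed
  show ?thesis using diam main by blast
next
  case False
  note G = assms(1) and C = assms(2) and T = assms(3)
  have le2: "gdist E u v \<le> 2" if "u \<in> V" "v \<in> V" for u v using False that by force
  have dt: "distance_transitive V E"
    unfolding distance_transitive_def
  proof (intro ballI impI)
    fix u v x y assume V: "u \<in> V" "v \<in> V" "x \<in> V" "y \<in> V" and eq: "gdist E u v = gdist E x y"
    consider "gdist E u v = 0" | "gdist E u v = 1" | "gdist E u v = 2" using le2[OF V(1,2)] by linarith
    then show "\<exists>\<sigma>\<in>automorphisms V E. \<sigma> u = x \<and> \<sigma> v = y"
    proof cases
      case 1
      have "u = v" using gd0[OF G C V(1,2)] 1 by simp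
      moreover have "x = y" using gd0[OF G C V(3,4)] 1 eq by simp
      moreover obtain \<sigma> where "\<sigma> \<in> automorphisms V E" "\<sigma> u = x"
        using T V unfolding two_distance_transitive_def vertex_transitive_def by blast
      ultimately show ?thesis by blast
    next
      case 2
      then show ?thesis using transfer[OF G C T, of 1 u x v y] V eq by (simp add: sphere_def)
    next
      case 3
      then show ?thesis using transfer[OF G C T, of 2 u x v y] V eq by (simp add: sphere_def)
    qed
  qed
  have lam: "\<exists>lam. \<forall>u\<in>V. \<forall>v\<in>V. E u v \<longrightarrow> card (nbhd E u \<inter> nbhd E v) = lam"
  proof (cases "\<exists>u0 v0. E u0 v0")
    case True
    then obtain u0 v0 where "E u0 v0" by blast
    then show ?thesis using a1_inv[OF G C T] by blast
  qed auto
  have mu: "\<exists>mu. \<forall>u\<in>V. \<forall>v\<in>V. u \<noteq> v \<and> \<not> E u v \<longrightarrow> card (nbhd E u \<inter> nbhd E v) = mu"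
  proof -
    have d2: "gdist E u v = 2" if "u \<in> V" "v \<in> V" "u \<noteq> v" "\<not> E u v" for u v
      using le2[OF that(1,2)] gd0[OF G C that(1,2)] gd1[OF G C that(1,2)] that(3,4) by linarith
    show ?thesis
    proof (cases "\<exists>u0\<in>V. \<exists>v0\<in>V. u0 \<noteq> v0 \<and> \<not> E u0 v0")
      case True
      then obtain u0 v0 where uv0: "u0 \<in> V" "v0 \<in> V" "u0 \<noteq> v0" "\<not> E u0 v0" by blast
      have "\<forall>u\<in>V. \<forall>v\<in>V. u \<noteq> v \<and> \<not> E u v \<longrightarrow> card (nbhd E u \<inter> nbhd E v) = c2 E u0 v0"
      proof (intro ballI impI)
        fix u v assume "u \<in> V" "v \<in> V" "u \<noteq> v \<and> \<not> E u v"
        then show "card (nbhd E u \<inter> nbhd E v) = c2 E u0 v0"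
          using c2_inv[OF G C T _ _ uv0(1,2) _ d2[OF uv0]] d2 unfolding c2_def by blast
      qed
      then show ?thesis by blast
    qed auto
  qed
  have "strongly_regular V E" unfolding strongly_regular_def using assms(4) lam mu by blast
  then show ?thesis using dt by blast
qed

end
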